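(* Let $p$ be a prime number and $k,N$ positive integers. Suppose that integers $n,m\geq N$ satisfy $n\equiv m\pmod{\varphi(p^N)}$. Then \[ C^{(-k)}_{n}\equiv C^{(-k)}_{m}\pmod{p^N}. \]
   Context: For any integer $k$, let $\mathrm{Li}_k(t)=\sum_{n=1}^{\infty} t^n/n^k$. The poly-Bernoulli numbers of type $C$, $C^{(k)}_n$ ($n\ge0$), are defined by $\frac{\mathrm{Li}_k(1-e^{-t})}{e^{t}-1}=\sum_{n=0}^{\infty}C^{(k)}_n\frac{t^n}{n!}$. For negative upper index these are integers. $\varphi$ denotes Euler's totient function, so $\varphi(p^N)=p^{N-1}(p-1)$. *)

theory Defs
  imports "HOL-Computational_Algebra.Formal_Power_Series" "HOL-Number_Theory.Number_Theory"
begin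

definition Li_neg_fps :: "nat \<Rightarrow> rat fps" where
  "Li_neg_fps k = Abs_fps (\<lambda>n. if n = 0 then 0 else of_nat n ^ k)"

definition polyBernoulliC_gf :: "nat \<Rightarrow> rat fps" where
  "polyBernoulliC_gf k =
     fps_compose (Li_neg_fps k) (1 - fps_exp (-1)) / (fps_exp 1 - 1)"

definition polyBernoulliC_neg :: "nat \<Rightarrow> nat \<Rightarrow> rat" where
  "polyBernoulliC_neg k n = fact n * fps_nth (polyBernoulliC_gf k) n"

end

theory Submission imports Defs begin
unbundle fps_syntax

abbreviation E :: "rat \<Rightarrow> rat fps" where "E a \<equiv> fps_exp a"

lemma E_inv: "E 1 * E (-1) = 1"
  using fps_exp_add_mult[of "1::rat" "-1"] by simp

inductive EC :: "rat fps \<Rightarrow> bool" where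
  EC0: "EC 0"
| ECs: "EC F \<Longrightarrow> EC (F + fps_const (of_int c) * E (of_nat i))"

lemma EC_add: "EC G \<Longrightarrow> EC F \<Longrightarrow> EC (F + G)"
proof (induction G rule: EC.induct)
  case EC0 then show ?case by simp
next
  case (ECs G c i)
  then show ?case using EC.ECs[of "F + G" c i] by (simp add: add.assoc)
qed

lemma EC_smult: "EC F \<Longrightarrow> EC (fps_const (of_int d) * F)"
proof (induction F rule: EC.induct)
  case EC0 then show ?case by (simp add: EC.EC0)
next
  case (ECs F c i)
  then show ?case using EC.ECs[of "fps_const (of_int d) * F" "d*c" i]
    by (simp add: distrib_left mult.assoc flip: fps_const_mult)
qed

lemma EC_neg: "EC F \<Longrightarrow> EC (- F)"
proof -
  assume "EC F"
  have "fps_const (of_int (-1)) * F = - F"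
    by (simp add: fps_eq_iff)
  then show ?thesis using EC_smult[OF \<open>EC F\<close>, of "-1"] by simp
qed

lemma EC_sub: "EC F \<Longrightarrow> EC G \<Longrightarrow> EC (F - G)"
  using EC_add[of "-G" F] EC_neg[of G] by simp

lemma EC_expmult: "EC F \<Longrightarrow> EC (E 1 * F)"
proof (induction F rule: EC.induct)
  case EC0 then show ?case by (simp add: EC.EC0)
next
  case (ECs F c i)
  have "E 1 * (fps_const (of_int c) * E (of_nat i)) = fps_const (of_int c) * E (of_nat (Suc i))"
    using fps_exp_add_mult[of "1::rat" "of_nat i"] by (simp add: algebra_simps)
  then have "E 1 * (F + fps_const (of_int c) * E (of_nat i)) = E 1 * F + fps_const (of_int c) * E (of_nat (Suc i))"
    by (simp only: distrib_left)
  then show ?case using EC.ECs[OF ECs(2), of c "Suc i"]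
    by (simp only:)
qed

lemma EC_deriv: "EC F \<Longrightarrow> EC (fps_deriv F)"
proof (induction F rule: EC.induct)
  case EC0 then show ?case by (simp add: EC.EC0)
next
  case (ECs F c i)
  have "fps_deriv (fps_const (of_int c) * E (of_nat i)) = fps_const (of_int (c * int i)) * E (of_nat i)"
    by (simp add: fps_eq_iff)
  then show ?case using EC.ECs[OF ECs(2), of "c * int i" i]
    by (simp only: fps_deriv_add)
qed

lemma EC_one: "EC 1"
  using EC.ECs[OF EC0, of 1 0] by simp

definition y :: "rat fps" where "y = 1 - E (-1)"

lemma y0: "y $ 0 = 0" by (simp add: y_def)
lemma dy: "fps_deriv y = E (-1)" by (simp add: y_def fps_eq_iff)

lemma Li_Suc: "Li_neg_fps (Suc k) = fps_X * fps_deriv (Li_neg_fps k)"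
  by (auto simp: fps_eq_iff Li_neg_fps_def)

lemma Li_0: "Li_neg_fps 0 * (1 - fps_X) = fps_X"
proof -
  have "Li_neg_fps 0 * (1 - fps_X) = Li_neg_fps 0 - fps_X * Li_neg_fps 0"
    by (simp add: algebra_simps)
  also have "\<dots> = fps_X"
    by (auto simp: fps_eq_iff Li_neg_fps_def)
  finally show ?thesis .
qed

lemma G0: "Li_neg_fps 0 oo y = E 1 - 1"
proof -
  have "(Li_neg_fps 0 oo y) * ((1 - fps_X) oo y) = y"
    using Li_0 fps_compose_mult_distrib[OF y0, of "Li_neg_fps 0" "1 - fps_X"] y0
    by simp
  then have "(Li_neg_fps 0 oo y) * E (-1) = 1 - E (-1)"
    using y0 by (simp add: fps_compose_sub_distrib y_def)
  then have "(Li_neg_fps 0 oo y) * (E (-1) * E 1) = (1 - E (-1)) * E 1"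
    by (metis mult.assoc)
  then show ?thesis using E_inv by (simp add: algebra_simps)
qed

lemma GSuc: "Li_neg_fps (Suc k) oo y = (E 1 - 1) * fps_deriv (Li_neg_fps k oo y)"
proof -
  have d: "fps_deriv (Li_neg_fps k oo y) = (fps_deriv (Li_neg_fps k) oo y) * E (-1)"
    using fps_compose_deriv[OF y0] dy by simp
  have "Li_neg_fps (Suc k) oo y = y * (fps_deriv (Li_neg_fps k) oo y)"
    unfolding Li_Suc fps_compose_mult_distrib[OF y0] using y0 by simp
  also have "\<dots> = y * E 1 * ((fps_deriv (Li_neg_fps k) oo y) * E (-1))"
    using E_inv by (simp add: algebra_simps)
  also have "y * E 1 = E 1 - 1"
    using E_inv by (simp add: y_def algebra_simps)
  finally show ?thesis using d by simp
qed

lemma G_EC: "\<exists>Q. EC Q \<and> Li_neg_fps k oo y = (E 1 - 1) * Q"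
proof (induction k)
  case 0
  then show ?case using G0 EC_one by (intro exI[of _ 1]) simp
next
  case (Suc k)
  then obtain Q where Q: "EC Q" "Li_neg_fps k oo y = (E 1 - 1) * Q" by blast
  have "fps_deriv (Li_neg_fps k oo y) = E 1 * Q + E 1 * fps_deriv Q - fps_deriv Q"
    unfolding Q(2) by (simp add: algebra_simps)
  moreover have "EC (E 1 * Q + E 1 * fps_deriv Q - fps_deriv Q)"
    by (intro EC_sub EC_add EC_expmult EC_deriv Q(1))
  ultimately show ?case using GSuc[of k] by metis
qed

lemma gf_EC: "\<exists>Q. EC Q \<and> polyBernoulliC_gf k = Q"
proof -
  obtain Q where Q: "EC Q" "Li_neg_fps k oo y = (E 1 - 1) * Q" using G_EC by blast
  have ne: "E 1 - 1 \<noteq> (0::rat fps)"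
  proof
    assume "E 1 - 1 = (0::rat fps)"
    then have "(E 1 - 1) $ 1 = (0::rat fps) $ 1" by simp
    then show False by simp
  qed
  have "polyBernoulliC_gf k = (E 1 - 1) * Q / (E 1 - 1)"
    unfolding polyBernoulliC_gf_def using Q(2) by (simp add: y_def)
  also have "\<dots> = Q" using ne by simp
  finally show ?thesis using Q(1) by blast
qed

lemma pow_cong:
  fixes p N n m i :: nat
  assumes p: "prime p" and n: "n \<ge> N" and m: "m \<ge> N"
    and c: "[n = m] (mod totient (p ^ N))"
  shows "[i ^ n = i ^ m] (mod p ^ N)"
proof (cases "p dvd i")
  case True
  have "p ^ N dvd i ^ N" using True by (simp add: dvd_power_same)
  then have "p ^ N dvd i ^ n" "p ^ N dvd i ^ m"
    using n m by (meson dvd_trans le_imp_power_dvd)+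
  then show ?thesis by (simp add: cong_def)
next
  case False
  then have cop: "coprime i (p ^ N)"
    using p by (metis coprime_commute coprime_power_right_iff prime_imp_coprime)
  have e: "[i ^ totient (p ^ N) = 1] (mod p ^ N)" using euler_theorem[OF cop] .
  have key: "[i ^ a = i ^ b] (mod p ^ N)" if ab: "a \<le> b" and cab: "[a = b] (mod totient (p ^ N))" for a b
  proof -
    have "[b = a] (mod totient (p ^ N))" using cab by (simp add: cong_sym_eq)
    then obtain q where "b = q * totient (p ^ N) + a" using cong_le_nat[OF ab] by blast
    then have t: "b = a + totient (p ^ N) * q" by (simp add: mult.commute)
    have "[i ^ a * (i ^ totient (p ^ N)) ^ q = i ^ a * 1 ^ q] (mod p ^ N)"
      by (intro cong_mult cong_refl cong_pow e)
    then show ?thesis by (simp add: t power_add power_mult cong_sym_eq)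
  qed
  show ?thesis
  proof (cases "n \<le> m")
    case True then show ?thesis using key c by blast
  next
    case False then show ?thesis using key[of m n] c by (simp add: cong_sym_eq)
  qed
qed

lemma EC_cong:
  fixes p N n m :: nat
  assumes p: "prime p" and n: "n \<ge> N" and m: "m \<ge> N"
    and c: "[n = m] (mod totient (p ^ N))"
  shows "EC F \<Longrightarrow> \<exists>q :: int. fact n * F $ n - fact m * F $ m = of_int (int (p ^ N) * q)"
proof (induction F rule: EC.induct)
  case EC0 then show ?case by (intro exI[of _ 0]) simp
next
  case (ECs F c i)
  then obtain q where q: "fact n * F $ n - fact m * F $ m = of_int (int (p ^ N) * q)" by blast
  have "[int i ^ n = int i ^ m] (mod int (p ^ N))"
    using pow_cong[OF p n m c, of i] by (metis cong_int_iff of_nat_power)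
  then obtain r where r: "int i ^ n - int i ^ m = int (p ^ N) * r"
    by (metis cong_iff_dvd_diff dvd_def)
  have "fact n * (F + fps_const (of_int c) * E (of_nat i)) $ n
        - fact m * (F + fps_const (of_int c) * E (of_nat i)) $ m
      = (fact n * F $ n - fact m * F $ m) + of_int c * (of_nat i ^ n - of_nat i ^ m)"
    by (simp add: algebra_simps)
  also have "\<dots> = of_int (int (p ^ N) * (q + c * r))"
  proof -
    have r': "(of_nat i ^ n - of_nat i ^ m :: rat) = of_nat p ^ N * of_int r"
      using arg_cong[of _ _ "of_int :: int \<Rightarrow> rat", OF r] by simp
    show ?thesis unfolding q r' by (simp add: algebra_simps)
  qed
  finally show ?case by blast
qed

theorem theorem2p5:
  fixes p k N n m :: nat
  assumes "prime p" and "k > 0" and "N > 0"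
    and "n \<ge> N" and "m \<ge> N"
    and "[n = m] (mod totient (p ^ N))"
  shows "\<exists>q :: int. polyBernoulliC_neg k n - polyBernoulliC_neg k m = of_int (int (p ^ N) * q)"
proof -
  obtain Q where Q: "EC Q" "polyBernoulliC_gf k = Q" using gf_EC by blast
  show ?thesis unfolding polyBernoulliC_neg_def Q(2)
    using EC_cong[OF assms(1,4,5,6) Q(1)] by simp
qed

end
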